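(* Let $\mathbb{A}$ be the Rado graph and $\mathbb{F}$ any field. For a finite set $S\subseteq\mathbb{A}$ let $f_S:\mathbb{A}\to\mathbb{F}$ be the indicator function of the set of vertices adjacent to every vertex of $S$, and let $V$ be the linear span of $\{f_S : S\subseteq\mathbb{A}\text{ finite}\}$. Then $V$ is not orbit-finitely spanned; consequently the space of finitely supported functions $\mathbb{A}\to\mathbb{F}$ (equivalently, the space of finitely supported linear maps $\operatorname{Lin}_{\mathbb{F}}\mathbb{A}\to\mathbb{F}$) is not orbit-finitely spanned.
   Context: The Rado graph is the Fraïssé limit of all finite undirected graphs (the countable homogeneous graph into which every finite graph embeds), with automorphism group $\operatorname{Aut}(\mathbb{A})$. $\operatorname{Aut}(\mathbb{A})$ acts on functions $f:\mathbb{A}\to\mathbb{F}$ by $(\pi f)(a)=f(\pi^{-1}a)$; a function is finitely supported if there is a finite $T\subseteq\mathbb{A}$ such that every automorphism fixing $T$ pointwise fixes $f$. A vector space with a linear $\operatorname{Aut}(\mathbb{A})$-action in which every vector is finitely supported is orbit-finitely spanned if it is spanned by an $\operatorname{Aut}(\mathbb{A})$-invariant subset with finitely many orbits (each of whose elements is finitely supported). *)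

theory Defs
  imports Complex_Main "HOL-Library.Countable_Set" "HOL-Library.Function_Algebras"
begin

text \<open>It is unique up to isomorphism, so we quantify over
all graphs on a vertex type satisfying these properties.\<close>

definition is_rado :: "('a \<Rightarrow> 'a \<Rightarrow> bool) \<Rightarrow> bool" where
  "is_rado E \<longleftrightarrow> countable (UNIV :: 'a set)
     \<and> (\<forall>x y. E x y \<longrightarrow> E y x) \<and> (\<forall>x. \<not> E x x)
     \<and> (\<forall>U W. finite U \<and> finite W \<and> U \<inter> W = {} \<longrightarrow>
          (\<exists>z. z \<notin> U \<and> z \<notin> W \<and> (\<forall>u\<in>U. E z u) \<and> (\<forall>w\<in>W. \<not> E z w)))"

definition Aut :: "('a \<Rightarrow> 'a \<Rightarrow> bool) \<Rightarrow> ('a \<Rightarrow> 'a) set" where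
  "Aut E = {\<pi>. bij \<pi> \<and> (\<forall>x y. E x y \<longleftrightarrow> E (\<pi> x) (\<pi> y))}"

definition act :: "('a \<Rightarrow> 'a) \<Rightarrow> ('a \<Rightarrow> 'k) \<Rightarrow> ('a \<Rightarrow> 'k)" where
  "act \<pi> f = (\<lambda>a. f (inv \<pi> a))"

definition fin_supp :: "('a \<Rightarrow> 'a \<Rightarrow> bool) \<Rightarrow> ('a \<Rightarrow> 'k) \<Rightarrow> bool" where
  "fin_supp E f \<longleftrightarrow> (\<exists>T. finite T \<and>
     (\<forall>\<pi>\<in>Aut E. (\<forall>t\<in>T. \<pi> t = t) \<longrightarrow> act \<pi> f = f))"

definition fspan :: "('a \<Rightarrow> 'k::field) set \<Rightarrow> ('a \<Rightarrow> 'k) set" where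
  "fspan X = module.span (\<lambda>c f x. c * f x) X"

definition orbit_finitely_spanned ::
  "('a \<Rightarrow> 'a \<Rightarrow> bool) \<Rightarrow> ('a \<Rightarrow> 'k::field) set \<Rightarrow> bool" where
  "orbit_finitely_spanned E V \<longleftrightarrow> (\<exists>X. X \<subseteq> V \<and> fspan X = V
     \<and> (\<forall>\<pi>\<in>Aut E. \<forall>f\<in>X. act \<pi> f \<in> X)
     \<and> (\<forall>f\<in>X. fin_supp E f)
     \<and> (\<exists>G. finite G \<and> G \<subseteq> X \<and> X = {act \<pi> g | \<pi> g. \<pi> \<in> Aut E \<and> g \<in> G}))"

definition common_nbr_ind :: "('a \<Rightarrow> 'a \<Rightarrow> bool) \<Rightarrow> 'a set \<Rightarrow> ('a \<Rightarrow> 'k::field)" where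
  "common_nbr_ind E S = (\<lambda>x. if (\<forall>s\<in>S. E x s) then 1 else 0)"

end

theory Submission
  imports Defs
begin

lemma fmod: "module (\<lambda>(c::'k::field) (f::'a\<Rightarrow>'k) x. c * f x)"
  by unfold_locales (auto simp: fun_eq_iff algebra_simps)

lemma fspan_mono: "A \<subseteq> B \<Longrightarrow> fspan A \<subseteq> fspan B"
  unfolding fspan_def by (rule module.span_mono[OF fmod])

lemma fspan_base: "a \<in> A \<Longrightarrow> a \<in> fspan A"
  unfolding fspan_def by (rule module.span_base[OF fmod])

lemma fspan_sub:
  fixes B :: "('a \<Rightarrow> 'k::field) set"
  assumes "A \<subseteq> B" "0 \<in> B" "\<And>x y. x \<in> B \<Longrightarrow> y \<in> B \<Longrightarrow> x + y \<in> B"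
    "\<And>c x. x \<in> B \<Longrightarrow> (\<lambda>a. c * x a) \<in> B"
  shows "fspan A \<subseteq> B"
  unfolding fspan_def
  apply (rule module.span_minimal[OF fmod assms(1)])
  apply (rule module.subspaceI[OF fmod])
  using assms by auto

lemma alt_sum_zero:
  fixes F :: "'a set \<Rightarrow> 'k::comm_ring_1"
  assumes "finite S" "s \<in> S" "\<And>A. A \<subseteq> S - {s} \<Longrightarrow> F (insert s A) = F A"
  shows "(\<Sum>A\<in>Pow S. (-1)^card A * F A) = 0"
proof -
  define S' where "S' = S - {s}"
  have S: "S = insert s S'" "s \<notin> S'" "finite S'" using assms S'_def by auto
  have dis: "Pow S' \<inter> insert s ` Pow S' = {}" using S(2) by auto
  have inj: "inj_on (insert s) (Pow S')" using S(2) unfolding inj_on_def by (metis PowD insert_ident subsetD)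
  have "(\<Sum>A\<in>Pow S. (-1)^card A * F A) =
     (\<Sum>A\<in>Pow S'. (-1)^card A * F A) + (\<Sum>A\<in>insert s ` Pow S'. (-1)^card A * F A)"
    unfolding S(1) Pow_insert
    by (rule sum.union_disjoint) (use S dis in auto)
  also have "(\<Sum>A\<in>insert s ` Pow S'. (-1)^card A * F A) = (\<Sum>A\<in>Pow S'. (-1)^card (insert s A) * F (insert s A))"
    by (rule sum.reindex[OF inj, unfolded comp_def])
  also have "\<dots> = (\<Sum>A\<in>Pow S'. - ((-1)^card A * F A))"
  proof (rule sum.cong)
    fix A assume A: "A \<in> Pow S'"
    hence "finite A" "s \<notin> A" using S finite_subset by auto
    thus "(-1)^card (insert s A) * F (insert s A) = - ((-1)^card A * F A)"
      using assms(3)[of A] A S'_def by simp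
  qed simp
  finally show ?thesis by (simp add: sum_negf)
qed

definition piso :: "('a \<Rightarrow> 'a \<Rightarrow> bool) \<Rightarrow> ('a \<times> 'a) set \<Rightarrow> bool" where
  "piso E R \<longleftrightarrow> (\<forall>a b c d. (a,b) \<in> R \<longrightarrow> (c,d) \<in> R \<longrightarrow> (a = c \<longleftrightarrow> b = d) \<and> (E a c \<longleftrightarrow> E b d))"

lemma piso_conv: "piso E (converse R) = piso E R"
  unfolding piso_def by blast

lemma forth:
  assumes r: "is_rado E" and p: "piso E R" and f: "finite R"
  shows "\<exists>R'. piso E R' \<and> finite R' \<and> R \<subseteq> R' \<and> x \<in> Domain R'"
proof (cases "x \<in> Domain R")
  case True thus ?thesis using p f by blast
next
  case False
  define U where "U = {b. \<exists>a. (a,b) \<in> R \<and> E x a}"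
  define W where "W = {b. \<exists>a. (a,b) \<in> R \<and> \<not> E x a}"
  have "U \<subseteq> Range R" "W \<subseteq> Range R" unfolding U_def W_def by auto
  moreover have "finite (Range R)" using f by (simp add: finite_Range)
  ultimately have fin: "finite U" "finite W" by (auto intro: finite_subset)
  have dis: "U \<inter> W = {}"
  proof (rule ccontr)
    assume "U \<inter> W \<noteq> {}"
    then obtain b a a' where H: "(a,b)\<in>R" "E x a" "(a',b)\<in>R" "\<not> E x a'" unfolding U_def W_def by blast
    have "a = a'" using p H(1,3) unfolding piso_def by blast
    thus False using H by simp
  qed
  have ext: "\<forall>U W. finite U \<and> finite W \<and> U \<inter> W = {} \<longrightarrow>
          (\<exists>z. z \<notin> U \<and> z \<notin> W \<and> (\<forall>u\<in>U. E z u) \<and> (\<forall>w\<in>W. \<not> E z w))"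
    using r unfolding is_rado_def by blast
  obtain y where y: "y \<notin> U" "y \<notin> W" "\<forall>u\<in>U. E y u" "\<forall>w\<in>W. \<not> E y w"
    using ext[rule_format, of U W] fin dis by blast
  have sym: "\<And>a b. E a b \<Longrightarrow> E b a" and irr: "\<And>a. \<not> E a a" using r unfolding is_rado_def by auto
  have yR: "y \<notin> Range R" using y unfolding U_def W_def by blast
  have key: "(a,b) \<in> R \<Longrightarrow> (E x a \<longleftrightarrow> E y b)" for a b
    by (cases "E x a") (use y in \<open>auto simp: U_def W_def\<close>)
  have "piso E (insert (x,y) R)"
    unfolding piso_def
  proof (intro allI impI)
    fix a b c d assume ab: "(a,b) \<in> insert (x,y) R" and cd: "(c,d) \<in> insert (x,y) R"
    show "(a = c \<longleftrightarrow> b = d) \<and> (E a c \<longleftrightarrow> E b d)"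
    proof (cases "(a,b) = (x,y)")
      case T1: True
      show ?thesis
      proof (cases "(c,d) = (x,y)")
        case True thus ?thesis using T1 irr by auto
      next
        case False
        hence "(c,d) \<in> R" using cd by auto
        hence "x \<noteq> c" "y \<noteq> d" "E x c \<longleftrightarrow> E y d" using yR \<open>x \<notin> Domain R\<close> key[of c d] by auto
        thus ?thesis using T1 by auto
      qed
    next
      case F1: False
      hence abR: "(a,b) \<in> R" using ab by auto
      show ?thesis
      proof (cases "(c,d) = (x,y)")
        case True
        have "x \<noteq> a" "y \<noteq> b" "E x a \<longleftrightarrow> E y b" using abR yR \<open>x \<notin> Domain R\<close> key[of a b] by auto
        moreover have "E a x \<longleftrightarrow> E x a" "E b y \<longleftrightarrow> E y b" using sym by blast+
        ultimately show ?thesis using True by auto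
      next
        case False
        hence "(c,d) \<in> R" using cd by auto
        thus ?thesis using abR p unfolding piso_def by blast
      qed
    qed
  qed
  thus ?thesis using f by (intro exI[of _ "insert (x,y) R"]) auto
qed

lemma back_forth:
  assumes r: "is_rado E" and p: "piso E R" and f: "finite R"
  shows "\<exists>R'. piso E R' \<and> finite R' \<and> R \<subseteq> R' \<and> x \<in> Domain R' \<and> x \<in> Range R'"
proof -
  obtain R1 where R1: "piso E R1" "finite R1" "R \<subseteq> R1" "x \<in> Domain R1"
    using forth[OF r p f] by blast
  obtain R2 where R2: "piso E R2" "finite R2" "converse R1 \<subseteq> R2" "x \<in> Domain R2"
    using forth[OF r, of "converse R1" x] R1 piso_conv by (metis finite_converse)
  show ?thesis
    apply (rule exI[of _ "converse R2"])
    using R1 R2 piso_conv by auto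
qed

lemma homog:
  assumes r: "is_rado E" and T: "finite T" and z: "z \<notin> T" "z' \<notin> T"
    and ag: "\<forall>t\<in>T. E z t = E z' t"
  shows "\<exists>\<pi>\<in>Aut E. (\<forall>t\<in>T. \<pi> t = t) \<and> \<pi> z = z'"
proof -
  have sym: "\<And>a b. E a b \<Longrightarrow> E b a" and irr: "\<And>a. \<not> E a a"
    and cnt: "countable (UNIV :: 'a set)" using r unfolding is_rado_def by auto
  define R0 where "R0 = insert (z,z') ((\<lambda>t. (t,t)) ` T)"
  have p0: "piso E R0" unfolding R0_def piso_def using z ag sym irr by auto
  have f0: "finite R0" unfolding R0_def using T by auto
  define nxt where "nxt = (\<lambda>R x. SOME R'. piso E R' \<and> finite R' \<and> R \<subseteq> R' \<and> x \<in> Domain R' \<and> x \<in> Range R')"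
  have nxt: "piso E R \<Longrightarrow> finite R \<Longrightarrow> piso E (nxt R x) \<and> finite (nxt R x) \<and> R \<subseteq> nxt R x \<and> x \<in> Domain (nxt R x) \<and> x \<in> Range (nxt R x)" for R x
    unfolding nxt_def by (rule someI_ex[OF back_forth[OF r]])
  define en where "en = from_nat_into (UNIV :: 'a set)"
  define sq where "sq = rec_nat R0 (\<lambda>k R. nxt R (en k))"
  have sq0: "sq 0 = R0" and sqS: "sq (Suc k) = nxt (sq k) (en k)" for k unfolding sq_def by auto
  have inv: "piso E (sq k) \<and> finite (sq k)" for k
    by (induction k) (use p0 f0 nxt in \<open>auto simp: sq0 sqS\<close>)
  have step: "sq k \<subseteq> sq (Suc k)" "en k \<in> Domain (sq (Suc k))" "en k \<in> Range (sq (Suc k))" for k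
    using nxt[of "sq k" "en k"] inv[of k] by (auto simp: sqS)
  have mono: "i \<le> j \<Longrightarrow> sq i \<subseteq> sq j" for i j
    by (rule lift_Suc_mono_le[of sq]) (use step in auto)
  define L where "L = (\<Union>k. sq k)"
  have pL: "piso E L" unfolding piso_def
  proof (intro allI impI)
    fix a b c d assume "(a,b) \<in> L" "(c,d) \<in> L"
    then obtain i j where "(a,b) \<in> sq i" "(c,d) \<in> sq j" unfolding L_def by auto
    hence "(a,b) \<in> sq (max i j)" "(c,d) \<in> sq (max i j)" using mono[of i "max i j"] mono[of j "max i j"] by auto
    thus "(a = c \<longleftrightarrow> b = d) \<and> (E a c \<longleftrightarrow> E b d)" using inv[of "max i j"] unfolding piso_def by blast
  qed
  have enS: "\<exists>k. en k = x" for x unfolding en_def using from_nat_into_surj[OF cnt] by blast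
  have dom: "\<exists>y. (x,y) \<in> L" for x
  proof -
    obtain k where "en k = x" using enS by blast
    thus ?thesis using step(2)[of k] unfolding L_def by blast
  qed
  have ran: "\<exists>x. (x,y) \<in> L" for y
  proof -
    obtain k where "en k = y" using enS by blast
    thus ?thesis using step(3)[of k] unfolding L_def by blast
  qed
  define \<pi> where "\<pi> = (\<lambda>x. SOME y. (x,y) \<in> L)"
  have pi: "(x, \<pi> x) \<in> L" for x unfolding \<pi>_def using dom by (rule someI_ex)
  have piu: "(x,y) \<in> L \<Longrightarrow> \<pi> x = y" for x y using pi[of x] pL unfolding piso_def by blast
  have "inj \<pi>" unfolding inj_def using pi pL unfolding piso_def by blast
  moreover have "surj \<pi>" using ran piu by (metis surjI)
  ultimately have "bij \<pi>" by (simp add: bij_def)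
  moreover have "E x y \<longleftrightarrow> E (\<pi> x) (\<pi> y)" for x y using pi[of x] pi[of y] pL unfolding piso_def by blast
  ultimately have "\<pi> \<in> Aut E" unfolding Aut_def by blast
  moreover have "R0 \<subseteq> L" unfolding L_def using sq0 by blast
  hence "(\<forall>t\<in>T. \<pi> t = t) \<and> \<pi> z = z'" using piu unfolding R0_def by blast
  ultimately show ?thesis by blast
qed

definition good :: "('a \<Rightarrow> 'a \<Rightarrow> bool) \<Rightarrow> 'a set \<Rightarrow> ('a \<Rightarrow> 'k) \<Rightarrow> bool" where
  "good E T h \<longleftrightarrow> (\<forall>z z'. z \<notin> T \<longrightarrow> z' \<notin> T \<longrightarrow> (\<forall>t\<in>T. E z t = E z' t) \<longrightarrow> h z = h z')"

definition Gn :: "('a \<Rightarrow> 'a \<Rightarrow> bool) \<Rightarrow> nat \<Rightarrow> ('a \<Rightarrow> 'k) set" where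
  "Gn E n = {h. \<exists>T. finite T \<and> card T \<le> n \<and> good E T h}"

definition Gany :: "('a \<Rightarrow> 'a \<Rightarrow> bool) \<Rightarrow> ('a \<Rightarrow> 'k) set" where
  "Gany E = {h. \<exists>T. finite T \<and> good E T h}"

lemma good_mono: "good E T h \<Longrightarrow> T \<subseteq> T' \<Longrightarrow> good E T' h"
  unfolding good_def by blast

lemma good_act:
  assumes "good E T h" "\<pi> \<in> Aut E"
  shows "good E (\<pi> ` T) (act \<pi> h)"
  unfolding good_def act_def
proof (intro allI impI)
  fix z z' assume z: "z \<notin> \<pi> ` T" "z' \<notin> \<pi> ` T" and ag: "\<forall>t\<in>\<pi> ` T. E z t = E z' t"
  have b: "bij \<pi>" and e: "\<And>x y. E x y \<longleftrightarrow> E (\<pi> x) (\<pi> y)" using assms(2) unfolding Aut_def by auto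
  have pi: "\<pi> (inv \<pi> x) = x" for x using b by (simp add: bij_is_surj surj_f_inv_f)
  have "inv \<pi> z \<notin> T" "inv \<pi> z' \<notin> T" using z pi by (metis image_eqI)+
  moreover have "\<forall>t\<in>T. E (inv \<pi> z) t = E (inv \<pi> z') t"
  proof
    fix t assume "t \<in> T"
    hence "E z (\<pi> t) = E z' (\<pi> t)" using ag by auto
    thus "E (inv \<pi> z) t = E (inv \<pi> z') t" using e[of "inv \<pi> z" t] e[of "inv \<pi> z'" t] pi by simp
  qed
  ultimately show "h (inv \<pi> z) = h (inv \<pi> z')" using assms(1) unfolding good_def by blast
qed

lemma fin_supp_good:
  assumes r: "is_rado E" and f: "fin_supp E f"
  shows "f \<in> Gany E"
proof -
  obtain T where T: "finite T" "\<forall>\<pi>\<in>Aut E. (\<forall>t\<in>T. \<pi> t = t) \<longrightarrow> act \<pi> f = f"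
    using f unfolding fin_supp_def by blast
  have "good E T f" unfolding good_def
  proof (intro allI impI)
    fix z z' assume zz: "z \<notin> T" "z' \<notin> T" "\<forall>t\<in>T. E z t = E z' t"
    obtain \<pi> where p: "\<pi> \<in> Aut E" "\<forall>t\<in>T. \<pi> t = t" "\<pi> z = z'" using homog[OF r T(1) zz] by blast
    have "act \<pi> f z' = f z'" using T(2) p by simp
    moreover have "inv \<pi> z' = z"
    proof -
      have "inj \<pi>" using p(1) unfolding Aut_def by (auto simp: bij_is_inj)
      thus ?thesis using p(3) inv_f_f by metis
    qed
    ultimately show "f z = f z'" unfolding act_def by simp
  qed
  thus ?thesis using T unfolding Gany_def by blast
qed

lemma good_add: "good E T x \<Longrightarrow> good E T y \<Longrightarrow> good E T (x + y)"
proof -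
  assume gx: "good E T x" and gy: "good E T y"
  show "good E T (x + y)" unfolding good_def
  proof (intro allI impI)
    fix z z' assume h: "z \<notin> T" "z' \<notin> T" "\<forall>t\<in>T. E z t = E z' t"
    have "x z = x z'" using gx h unfolding good_def by blast
    moreover have "y z = y z'" using gy h unfolding good_def by blast
    ultimately show "(x + y) z = (x + y) z'" by simp
  qed
qed

lemma good_scale: "good E T x \<Longrightarrow> good E T (\<lambda>a. c * x a)"
proof -
  assume gx: "good E T x"
  show "good E T (\<lambda>a. c * x a)" unfolding good_def
  proof (intro allI impI)
    fix z z' assume h: "z \<notin> T" "z' \<notin> T" "\<forall>t\<in>T. E z t = E z' t"
    have "x z = x z'" using gx h unfolding good_def by blast
    thus "c * x z = c * x z'" by simp
  qed
qed

lemma good_zero: "good E T 0"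
  unfolding good_def zero_fun_def by (intro allI impI) (rule refl)

lemma Gany_span:
  "fspan (Gany E :: ('a \<Rightarrow> 'k::field) set) \<subseteq> Gany E"
proof (rule fspan_sub)
  show "0 \<in> Gany E" unfolding Gany_def by (intro CollectI exI[of _ "{}"] conjI finite.emptyI good_zero)
  show "x + y \<in> Gany E" if xy: "x \<in> Gany E" "y \<in> Gany E" for x y :: "'a \<Rightarrow> 'k"
  proof -
    obtain T1 T2 where "finite T1" "good E T1 x" "finite T2" "good E T2 y" using xy unfolding Gany_def by blast
    hence "good E (T1 \<union> T2) x" "good E (T1 \<union> T2) y" "finite (T1 \<union> T2)" using good_mono by blast+
    hence "finite (T1 \<union> T2) \<and> good E (T1 \<union> T2) (x + y)" using good_add by blast
    thus ?thesis unfolding Gany_def by blast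
  qed
  show "(\<lambda>a. c * x a) \<in> Gany E" if xx: "x \<in> Gany E" for c and x :: "'a \<Rightarrow> 'k"
  proof -
    obtain T where "finite T" "good E T x" using xx unfolding Gany_def by blast
    moreover from this(2) have "good E T (\<lambda>a. c * x a)" by (rule good_scale)
    ultimately show ?thesis unfolding Gany_def by (intro CollectI exI[of _ T] conjI)
  qed
qed (rule order_refl)

lemma rado_infinite: fixes E :: "'a \<Rightarrow> 'a \<Rightarrow> bool" assumes r: "is_rado E" shows "infinite (UNIV :: 'a set)"
proof
  assume f: "finite (UNIV :: 'a set)"
  have ext: "\<forall>U W. finite U \<and> finite W \<and> U \<inter> W = {} \<longrightarrow>
          (\<exists>z. z \<notin> U \<and> z \<notin> W \<and> (\<forall>u\<in>U. E z u) \<and> (\<forall>w\<in>W. \<not> E z w))"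
    using r unfolding is_rado_def by blast
  show False using ext[rule_format, of "UNIV::'a set" "{}::'a set"] f by auto
qed

lemma core:
  fixes E :: "'a \<Rightarrow> 'a \<Rightarrow> bool"
  assumes r: "is_rado E" and S: "finite S" "card S = Suc n"
  shows "(common_nbr_ind E S :: 'a \<Rightarrow> 'k::field) \<notin> fspan (Gn E n)"
proof
  assume mem: "(common_nbr_ind E S :: 'a \<Rightarrow> 'k) \<in> fspan (Gn E n)"
  define \<phi> where "\<phi> = (\<lambda>(zf::'a set \<Rightarrow> 'a) (k::'a \<Rightarrow> 'k). \<Sum>A\<in>Pow S. (-1)^card A * k (zf A))"
  define adm where "adm = (\<lambda>U zf. \<forall>A\<subseteq>S. zf A \<notin> U \<and> (\<forall>u\<in>U. E (zf A) u \<longleftrightarrow> u \<in> A))"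
  define VV where "VV = {k. \<exists>U. finite U \<and> S \<subseteq> U \<and> (\<forall>zf. adm U zf \<longrightarrow> \<phi> zf k = 0)}"
  have admU: "adm U zf \<Longrightarrow> U' \<subseteq> U \<Longrightarrow> adm U' zf" for U U' zf unfolding adm_def by blast
  have "fspan (Gn E n) \<subseteq> VV"
  proof (rule fspan_sub)
    show "Gn E n \<subseteq> VV"
    proof
      fix h :: "'a \<Rightarrow> 'k" assume "h \<in> Gn E n"
      then obtain T where T: "finite T" "card T \<le> n" "good E T h" unfolding Gn_def by blast
      obtain s where s: "s \<in> S" "s \<notin> T"
      proof -
        have "\<not> S \<subseteq> T"
        proof
          assume "S \<subseteq> T"
          hence "card S \<le> card T" using T(1) by (rule card_mono[rotated])
          thus False using T(2) S(2) by simp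
        qed
        thus ?thesis using that by blast
      qed
      have "\<phi> zf h = 0" if a: "adm (S \<union> T) zf" for zf
        unfolding \<phi>_def
      proof (rule alt_sum_zero[OF S(1) s(1)])
        fix A assume A: "A \<subseteq> S - {s}"
        have A1: "A \<subseteq> S" "insert s A \<subseteq> S" using A s by auto
        show "h (zf (insert s A)) = h (zf A)"
          using T(3)[unfolded good_def, rule_format, of "zf (insert s A)" "zf A"]
            a[unfolded adm_def, rule_format, OF A1(1)] a[unfolded adm_def, rule_format, OF A1(2)] s
          by auto
      qed
      thus "h \<in> VV" unfolding VV_def using S T by blast
    qed
    show "0 \<in> VV" unfolding VV_def \<phi>_def using S by (intro CollectI exI[of _ S]) simp
    show "x + y \<in> VV" if xy: "x \<in> VV" "y \<in> VV" for x y
    proof -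
      obtain U1 U2 where U: "finite U1" "S \<subseteq> U1" "\<forall>zf. adm U1 zf \<longrightarrow> \<phi> zf x = 0"
        "finite U2" "\<forall>zf. adm U2 zf \<longrightarrow> \<phi> zf y = 0" using xy unfolding VV_def by blast
      have "\<phi> zf (x + y) = 0" if "adm (U1 \<union> U2) zf" for zf
      proof -
        have "\<phi> zf (x + y) = \<phi> zf x + \<phi> zf y" unfolding \<phi>_def by (simp add: sum.distrib algebra_simps)
        moreover have "adm U1 zf" "adm U2 zf" using admU that by blast+
        ultimately show ?thesis using U by simp
      qed
      thus ?thesis unfolding VV_def using U by blast
    qed
    show "(\<lambda>a. c * x a) \<in> VV" if xx: "x \<in> VV" for c x
    proof -
      obtain U where U: "finite U" "S \<subseteq> U" "\<forall>zf. adm U zf \<longrightarrow> \<phi> zf x = 0" using xx unfolding VV_def by blast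
      have "\<phi> zf (\<lambda>a. c * x a) = c * \<phi> zf x" for zf unfolding \<phi>_def by (simp add: sum_distrib_left algebra_simps)
      thus ?thesis unfolding VV_def using U by (intro CollectI exI[of _ U]) simp
    qed
  qed
  with mem obtain U where U: "finite U" "S \<subseteq> U" "\<forall>zf. adm U zf \<longrightarrow> \<phi> zf (common_nbr_ind E S) = 0"
    unfolding VV_def by blast
  have ext: "\<forall>U W. finite U \<and> finite W \<and> U \<inter> W = {} \<longrightarrow>
          (\<exists>z. z \<notin> U \<and> z \<notin> W \<and> (\<forall>u\<in>U. E z u) \<and> (\<forall>w\<in>W. \<not> E z w))"
    using r unfolding is_rado_def by blast
  have "\<forall>A. \<exists>z. A \<subseteq> S \<longrightarrow> z \<notin> U \<and> (\<forall>u\<in>U. E z u \<longleftrightarrow> u \<in> A)"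
  proof
    fix A show "\<exists>z. A \<subseteq> S \<longrightarrow> z \<notin> U \<and> (\<forall>u\<in>U. E z u \<longleftrightarrow> u \<in> A)"
    proof (cases "A \<subseteq> S")
      case True
      hence "finite A" "A \<subseteq> U" using S U finite_subset by auto
      then obtain z where "z \<notin> A" "z \<notin> U - A" "\<forall>u\<in>A. E z u" "\<forall>w\<in>U - A. \<not> E z w"
        using ext[rule_format, of A "U - A"] U by auto
      thus ?thesis using \<open>A \<subseteq> U\<close> by blast
    qed simp
  qed
  then obtain zf where zf: "\<And>A. A \<subseteq> S \<Longrightarrow> zf A \<notin> U \<and> (\<forall>u\<in>U. E (zf A) u \<longleftrightarrow> u \<in> A)"
    by metis
  have "adm U zf" unfolding adm_def using zf by blast
  hence z0: "\<phi> zf (common_nbr_ind E S) = 0" using U by blast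
  have "\<phi> zf (common_nbr_ind E S) = (\<Sum>A\<in>Pow S. if A = S then (-1)^card A else (0::'k))"
    unfolding \<phi>_def
  proof (rule sum.cong)
    fix A assume A: "A \<in> Pow S"
    have "(\<forall>s\<in>S. E (zf A) s) \<longleftrightarrow> S \<subseteq> A" using zf[of A] A U by auto
    hence "(\<forall>s\<in>S. E (zf A) s) \<longleftrightarrow> A = S" using A by auto
    thus "(-1)^card A * common_nbr_ind E S (zf A) = (if A = S then (-1)^card A else (0::'k))"
      unfolding common_nbr_ind_def by auto
  qed simp
  also have "\<dots> = (-1)^card S" using S by (simp add: sum.delta')
  finally show False using z0 by simp
qed

lemma GanyD: "x \<in> Gany E \<Longrightarrow> \<exists>T. finite T \<and> good E T x"
  unfolding Gany_def by simp

lemma main_aux: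
  fixes E :: "'a \<Rightarrow> 'a \<Rightarrow> bool" and V :: "('a \<Rightarrow> 'k::field) set"
  assumes r: "is_rado E" and o: "orbit_finitely_spanned E V" and VG: "V \<subseteq> Gany E"
    and inV: "\<And>S. finite S \<Longrightarrow> common_nbr_ind E S \<in> V"
  shows False
proof -
    obtain X where X12: "X \<subseteq> V" "fspan X = V"
      and X3: "\<exists>G. finite G \<and> G \<subseteq> X \<and> X = {act \<pi> g | \<pi> g. \<pi> \<in> Aut E \<and> g \<in> G}"
    using o unfolding orbit_finitely_spanned_def by (elim exE conjE) (rule that; (assumption | (intro exI conjI; assumption)))
  obtain G where G: "finite G" "G \<subseteq> X" "X = {act \<pi> g | \<pi> g. \<pi> \<in> Aut E \<and> g \<in> G}"
    using X3 by (elim exE conjE) (rule that; assumption)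
  note X = X12 G
  have "\<forall>g\<in>G. \<exists>T. finite T \<and> good E T g"
  proof
    fix g assume "g \<in> G"
    hence "g \<in> Gany E" using X(1,4) VG by blast
    thus "\<exists>T. finite T \<and> good E T g" by (rule GanyD)
  qed
  then obtain Tg where Tg: "\<And>g. g \<in> G \<Longrightarrow> finite (Tg g) \<and> good E (Tg g) g" by (metis (no_types))
  define n where "n = (\<Sum>g\<in>G. card (Tg g))"
  have "X \<subseteq> Gn E n"
  proof
    fix x assume "x \<in> X"
    hence "\<exists>\<pi> g. x = act \<pi> g \<and> \<pi> \<in> Aut E \<and> g \<in> G" unfolding X(5) by (rule CollectD)
    then obtain \<pi> g where pg: "\<pi> \<in> Aut E" "g \<in> G" "x = act \<pi> g" by blast
    have fT: "finite (Tg g)" and gT: "good E (Tg g) g" using Tg[OF pg(2)] by auto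
    have "card (\<pi> ` Tg g) \<le> card (Tg g)" by (rule card_image_le[OF fT])
    also have "\<dots> \<le> n" unfolding n_def by (rule member_le_sum[OF pg(2) _ X(3)]) simp
    finally have c: "card (\<pi> ` Tg g) \<le> n" .
    have "good E (\<pi> ` Tg g) (act \<pi> g)" by (rule good_act[OF gT pg(1)])
    moreover have "finite (\<pi> ` Tg g)" using fT by (rule finite_imageI)
    ultimately show "x \<in> Gn E n" unfolding Gn_def pg(3) using c by (intro CollectI exI[of _ "\<pi> ` Tg g"] conjI)
  qed
  hence "fspan X \<subseteq> fspan (Gn E n)" by (rule fspan_mono)
  hence sub: "V \<subseteq> fspan (Gn E n)" using X(2) by simp
  obtain S :: "'a set" where S: "finite S" "card S = Suc n"
    using infinite_arbitrarily_large[OF rado_infinite[OF r]] by blast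
  have "(common_nbr_ind E S :: 'a \<Rightarrow> 'k) \<in> fspan (Gn E n)" using sub inV[OF S(1)] by (rule subsetD)
  thus False using core[OF r S, where 'k='k] by (rule notE[rotated])
qed

theorem mainTheorem18:
  fixes E :: "'a \<Rightarrow> 'a \<Rightarrow> bool"
  assumes "is_rado E"
  shows "\<not> orbit_finitely_spanned E
            (fspan {common_nbr_ind E S :: 'a \<Rightarrow> 'k::field | S. finite S})
       \<and> \<not> orbit_finitely_spanned E {f :: 'a \<Rightarrow> 'k. fin_supp E f}"
proof
  show "\<not> orbit_finitely_spanned E
            (fspan {common_nbr_ind E S :: 'a \<Rightarrow> 'k::field | S. finite S})"
  proof
    assume o: "orbit_finitely_spanned E (fspan {common_nbr_ind E S :: 'a \<Rightarrow> 'k::field | S. finite S})"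
    have "{common_nbr_ind E S :: 'a \<Rightarrow> 'k::field | S. finite S} \<subseteq> Gany E"
    proof
      fix f :: "'a \<Rightarrow> 'k" assume "f \<in> {common_nbr_ind E S :: 'a \<Rightarrow> 'k::field | S. finite S}"
      then obtain S where S: "finite S" "f = common_nbr_ind E S" by blast
      have "good E S f" unfolding good_def S(2) common_nbr_ind_def
      proof (intro allI impI)
        fix z z' assume "z \<notin> S" "z' \<notin> S" "\<forall>t\<in>S. E z t = E z' t"
        hence "(\<forall>s\<in>S. E z s) = (\<forall>s\<in>S. E z' s)" by blast
        thus "(if \<forall>s\<in>S. E z s then 1 else 0) = (if \<forall>s\<in>S. E z' s then 1 else (0::'k))" by simp
      qed
      thus "f \<in> Gany E" unfolding Gany_def using S(1) by (intro CollectI exI[of _ S] conjI)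
    qed
    hence "fspan {common_nbr_ind E S :: 'a \<Rightarrow> 'k::field | S. finite S} \<subseteq> fspan (Gany E)"
      by (rule fspan_mono)
    hence VG: "fspan {common_nbr_ind E S :: 'a \<Rightarrow> 'k::field | S. finite S} \<subseteq> Gany E"
      using Gany_span by (rule order_trans)
    have inV: "common_nbr_ind E S \<in> fspan {common_nbr_ind E S :: 'a \<Rightarrow> 'k::field | S. finite S}"
      if "finite S" for S
      by (rule fspan_base) (use that in blast)
    show False by (rule main_aux[OF assms o VG inV])
  qed
  show "\<not> orbit_finitely_spanned E {f :: 'a \<Rightarrow> 'k. fin_supp E f}"
  proof
    assume o: "orbit_finitely_spanned E {f :: 'a \<Rightarrow> 'k. fin_supp E f}"
    have VG: "{f :: 'a \<Rightarrow> 'k. fin_supp E f} \<subseteq> Gany E" using fin_supp_good[OF assms] by blast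
    have inV: "common_nbr_ind E S \<in> {f :: 'a \<Rightarrow> 'k. fin_supp E f}" if fS: "finite S" for S
      unfolding mem_Collect_eq fin_supp_def
    proof (intro exI[of _ S] conjI ballI impI)
      show "finite S" by (rule fS)
      fix \<pi> assume p: "\<pi> \<in> Aut E" "\<forall>t\<in>S. \<pi> t = t"
      have b: "bij \<pi>" and e: "\<And>x y. E x y \<longleftrightarrow> E (\<pi> x) (\<pi> y)" using p(1) unfolding Aut_def by auto
      have pi: "\<pi> (inv \<pi> x) = x" for x using b by (simp add: bij_is_surj surj_f_inv_f)
      have ee: "E (inv \<pi> a) s \<longleftrightarrow> E a s" if "s \<in> S" for a s
      proof -
        have "E (inv \<pi> a) s \<longleftrightarrow> E (\<pi> (inv \<pi> a)) (\<pi> s)" by (rule e)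
        also have "\<dots> \<longleftrightarrow> E a s" using pi p(2) that by simp
        finally show ?thesis .
      qed
      show "act \<pi> (common_nbr_ind E S) = (common_nbr_ind E S :: 'a \<Rightarrow> 'k)"
        unfolding act_def common_nbr_ind_def using ee by (simp cong: ball_cong)
    qed
    show False by (rule main_aux[OF assms o VG inV])
  qed
qed

end
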